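(* Let $N\ge 2$, let $c_1,\dots,c_N$ be positive real numbers and $\nu_1,\dots,\nu_N$ positive integers, and put $q=1/\sum_{i=1}^N\nu_i^{-1}$. Then for $\mathrm{Re}\,s>0$ the integral below converges absolutely and \[\int_{H_N}\Big(\sum_{i=1}^Nc_ie^{-\nu_ix_i}\Big)^{-s}d\lambda=q\,(\nu_1\cdots\nu_N)^{-1}\Big(\prod_{i=1}^Nc_i^{q/\nu_i}\Big)^{-s}\Gamma(s)^{-1}\prod_{i=1}^N\Gamma(qs/\nu_i).\]
   Context: $H_N=\{x\in\mathbb{R}^N:\sum_i x_i=0\}$ and $d\lambda$ is Lebesgue measure on $H_N$, normalized so that it corresponds to Lebesgue measure $dx_1\cdots dx_{N-1}$ on $\mathbb{R}^{N-1}$ under the parametrization $(x_1,\dots,x_{N-1})\mapsto(x_1,\dots,x_{N-1},-x_1-\dots-x_{N-1})$. Complex powers of positive reals use the real logarithm. *)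

theory Defs
  imports "HOL-Analysis.Analysis"
begin

text \<open>Parametrization of the hyperplane H_N = {x. sum x = 0} by its first N-1
  coordinates (indices 0..N-2); coordinate N-1 is minus the sum of the others.\<close>
definition hyp_point :: "nat \<Rightarrow> (nat \<Rightarrow> real) \<Rightarrow> nat \<Rightarrow> real" where
  "hyp_point N y i = (if i < N - 1 then y i else - (\<Sum>j<N - 1. y j))"

end

theory Submission
  imports Defs
begin


lemma distr_fiber1:
  assumes sf1: "sigma_finite_measure M1" and sf2: "sigma_finite_measure M2"
    and Fm: "(\<lambda>(x,y). (T y x, y)) \<in> M1 \<Otimes>\<^sub>M M2 \<rightarrow>\<^sub>M M1 \<Otimes>\<^sub>M M2"
    and Tm: "\<And>y. y \<in> space M2 \<Longrightarrow> T y \<in> M1 \<rightarrow>\<^sub>M M1"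
    and D: "\<And>y. y \<in> space M2 \<Longrightarrow> distr M1 M1 (T y) = M1"
  shows "distr (M1 \<Otimes>\<^sub>M M2) (M1 \<Otimes>\<^sub>M M2) (\<lambda>(x,y). (T y x, y)) = M1 \<Otimes>\<^sub>M M2"
proof (rule measure_eqI)
  interpret pair_sigma_finite M1 M2 using sf1 sf2 by (simp add: pair_sigma_finite_def)
  fix A assume A: "A \<in> sets (distr (M1 \<Otimes>\<^sub>M M2) (M1 \<Otimes>\<^sub>M M2) (\<lambda>(x,y). (T y x, y)))"
  then have A': "A \<in> sets (M1 \<Otimes>\<^sub>M M2)" by simp
  have "emeasure (distr (M1 \<Otimes>\<^sub>M M2) (M1 \<Otimes>\<^sub>M M2) (\<lambda>(x,y). (T y x, y))) A
      = \<integral>\<^sup>+ z. indicator A z \<partial>distr (M1 \<Otimes>\<^sub>M M2) (M1 \<Otimes>\<^sub>M M2) (\<lambda>(x,y). (T y x, y))"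
    using A by simp
  also have "\<dots> = \<integral>\<^sup>+ z. indicator A ((\<lambda>(x,y). (T y x, y)) z) \<partial>(M1 \<Otimes>\<^sub>M M2)"
    using A' Fm by (intro nn_integral_distr) auto
  also have "\<dots> = \<integral>\<^sup>+ y. \<integral>\<^sup>+ x. indicator A (T y x, y) \<partial>M1 \<partial>M2"
  proof (subst nn_integral_snd[symmetric])
    show "(\<lambda>z. indicator A ((\<lambda>(x,y). (T y x, y)) z) :: ennreal) \<in> borel_measurable (M1 \<Otimes>\<^sub>M M2)"
      using A' Fm by (intro measurable_compose[OF Fm] borel_measurable_indicator) 
  qed simp
  also have "\<dots> = \<integral>\<^sup>+ y. \<integral>\<^sup>+ x. indicator A (x, y) \<partial>distr M1 M1 (T y) \<partial>M2"
  proof (intro nn_integral_cong)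
    fix y assume y: "y \<in> space M2"
    show "(\<integral>\<^sup>+ x. indicator A (T y x, y) \<partial>M1) = \<integral>\<^sup>+ x. indicator A (x, y) \<partial>distr M1 M1 (T y)"
      using A' y Tm by (subst nn_integral_distr) (auto intro!: measurable_Pair1')
  qed
  also have "\<dots> = \<integral>\<^sup>+ y. \<integral>\<^sup>+ x. indicator A (x, y) \<partial>M1 \<partial>M2"
    by (intro nn_integral_cong) (simp add: D)
  also have "\<dots> = emeasure (M1 \<Otimes>\<^sub>M M2) A"
    using A' by (subst nn_integral_snd) auto
  finally show "emeasure (distr (M1 \<Otimes>\<^sub>M M2) (M1 \<Otimes>\<^sub>M M2) (\<lambda>(x,y). (T y x, y))) A = emeasure (M1 \<Otimes>\<^sub>M M2) A" .
qed simp

lemma distr_fiber2: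
  assumes sf1: "sigma_finite_measure M1" and sf2: "sigma_finite_measure M2"
    and Fm: "(\<lambda>(x,y). (x, T x y)) \<in> M1 \<Otimes>\<^sub>M M2 \<rightarrow>\<^sub>M M1 \<Otimes>\<^sub>M M2"
    and Tm: "\<And>x. x \<in> space M1 \<Longrightarrow> T x \<in> M2 \<rightarrow>\<^sub>M M2"
    and D: "\<And>x. x \<in> space M1 \<Longrightarrow> distr M2 M2 (T x) = M2"
  shows "distr (M1 \<Otimes>\<^sub>M M2) (M1 \<Otimes>\<^sub>M M2) (\<lambda>(x,y). (x, T x y)) = M1 \<Otimes>\<^sub>M M2"
proof (rule measure_eqI)
  interpret pair_sigma_finite M1 M2 using sf1 sf2 by (simp add: pair_sigma_finite_def)
  fix A assume A: "A \<in> sets (distr (M1 \<Otimes>\<^sub>M M2) (M1 \<Otimes>\<^sub>M M2) (\<lambda>(x,y). (x, T x y)))"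
  then have A': "A \<in> sets (M1 \<Otimes>\<^sub>M M2)" by simp
  have "emeasure (distr (M1 \<Otimes>\<^sub>M M2) (M1 \<Otimes>\<^sub>M M2) (\<lambda>(x,y). (x, T x y))) A
      = \<integral>\<^sup>+ z. indicator A z \<partial>distr (M1 \<Otimes>\<^sub>M M2) (M1 \<Otimes>\<^sub>M M2) (\<lambda>(x,y). (x, T x y))"
    using A by simp
  also have "\<dots> = \<integral>\<^sup>+ z. indicator A ((\<lambda>(x,y). (x, T x y)) z) \<partial>(M1 \<Otimes>\<^sub>M M2)"
    using A' Fm by (intro nn_integral_distr) auto
  also have "\<dots> = \<integral>\<^sup>+ x. \<integral>\<^sup>+ y. indicator A (x, T x y) \<partial>M2 \<partial>M1"
  proof (subst M2.nn_integral_fst[symmetric])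
    show "(\<lambda>z. indicator A ((\<lambda>(x,y). (x, T x y)) z) :: ennreal) \<in> borel_measurable (M1 \<Otimes>\<^sub>M M2)"
      using A' Fm by (intro measurable_compose[OF Fm] borel_measurable_indicator) 
  qed simp
  also have "\<dots> = \<integral>\<^sup>+ x. \<integral>\<^sup>+ y. indicator A (x, y) \<partial>distr M2 M2 (T x) \<partial>M1"
  proof (intro nn_integral_cong)
    fix x assume x: "x \<in> space M1"
    show "(\<integral>\<^sup>+ y. indicator A (x, T x y) \<partial>M2) = \<integral>\<^sup>+ y. indicator A (x, y) \<partial>distr M2 M2 (T x)"
      using A' x Tm by (subst nn_integral_distr) (auto intro!: measurable_Pair2')
  qed
  also have "\<dots> = \<integral>\<^sup>+ x. \<integral>\<^sup>+ y. indicator A (x, y) \<partial>M2 \<partial>M1"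
    by (intro nn_integral_cong) (simp add: D)
  also have "\<dots> = emeasure (M1 \<Otimes>\<^sub>M M2) A"
    using A' by (subst M2.nn_integral_fst) auto
  finally show "emeasure (distr (M1 \<Otimes>\<^sub>M M2) (M1 \<Otimes>\<^sub>M M2) (\<lambda>(x,y). (x, T x y))) A = emeasure (M1 \<Otimes>\<^sub>M M2) A" .
qed simp

interpretation lb: product_sigma_finite "\<lambda>_::nat. lborel :: real measure"
  by (simp add: product_sigma_finite_def sigma_finite_lborel)

lemma distr_lborel_translate: "distr lborel lborel (\<lambda>x. x + (a::real)) = lborel"
proof -
  have "distr lborel lborel (\<lambda>x. x + (a::real)) = distr lborel borel ((+) a)"
    by (intro distr_cong) (auto simp: add.commute)
  then show ?thesis using lborel_distr_plus[of a] by simp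
qed

lemma PiM_translate:
  assumes "finite I"
  shows "distr (Pi\<^sub>M I (\<lambda>_. lborel)) (Pi\<^sub>M I (\<lambda>_. lborel)) (\<lambda>y. \<lambda>i\<in>I. y i + (a i::real)) = Pi\<^sub>M I (\<lambda>_::nat. lborel)"
proof (rule lb.PiM_eqI[OF assms])
  fix A :: "nat \<Rightarrow> real set" assume A: "\<And>i. i \<in> I \<Longrightarrow> A i \<in> sets lborel"
  have m: "(\<lambda>y. \<lambda>i\<in>I. y i + (a i::real)) \<in> Pi\<^sub>M I (\<lambda>_. lborel) \<rightarrow>\<^sub>M Pi\<^sub>M I (\<lambda>_. lborel)"
    by measurable
  have pm: "(\<lambda>x. x + a i) -` A i \<in> sets lborel" if "i \<in> I" for i
  proof -
    have "(\<lambda>x. x + a i) -` A i \<inter> space lborel \<in> sets lborel"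
      by (rule measurable_sets[OF _ A[OF that]]) measurable
    then show ?thesis by simp
  qed
  have pre: "(\<lambda>y. \<lambda>i\<in>I. y i + a i) -` Pi\<^sub>E I A \<inter> space (Pi\<^sub>M I (\<lambda>_. lborel))
      = Pi\<^sub>E I (\<lambda>i. (\<lambda>x. x + a i) -` A i)"
    by (auto simp: space_PiM PiE_def Pi_def extensional_def)
  have "emeasure (distr (Pi\<^sub>M I (\<lambda>_. lborel)) (Pi\<^sub>M I (\<lambda>_. lborel)) (\<lambda>y. \<lambda>i\<in>I. y i + a i)) (Pi\<^sub>E I A)
     = emeasure (Pi\<^sub>M I (\<lambda>_. lborel)) (Pi\<^sub>E I (\<lambda>i. (\<lambda>x. x + a i) -` A i))"
    using A assms pm by (subst emeasure_distr[OF m]) (auto intro!: sets_PiM_I_finite simp: pre)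
  also have "\<dots> = (\<Prod>i\<in>I. emeasure lborel ((\<lambda>x. x + a i) -` A i))"
    using pm assms by (subst lb.emeasure_PiM) auto
  also have "\<dots> = (\<Prod>i\<in>I. emeasure lborel (A i))"
  proof (intro prod.cong refl)
    fix i assume i: "i \<in> I"
    have "emeasure lborel (A i) = emeasure (distr lborel lborel (\<lambda>x. x + a i)) (A i)"
      by (simp add: distr_lborel_translate)
    also have "\<dots> = emeasure lborel ((\<lambda>x. x + a i) -` A i)"
      using A i by (subst emeasure_distr) auto
    finally show "emeasure lborel ((\<lambda>x. x + a i) -` A i) = emeasure lborel (A i)" by simp
  qed
  finally show "emeasure (distr (Pi\<^sub>M I (\<lambda>_. lborel)) (Pi\<^sub>M I (\<lambda>_. lborel)) (\<lambda>y. \<lambda>i\<in>I. y i + a i)) (Pi\<^sub>E I A)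
     = (\<Prod>i\<in>I. emeasure lborel (A i))" .
qed simp




lemma hyper:
  fixes n :: nat and g :: "nat \<Rightarrow> real \<Rightarrow> complex" and w :: "nat \<Rightarrow> real"
  assumes gi: "\<And>i. i \<le> n \<Longrightarrow> integrable lborel (g i)" and ws: "(\<Sum>i\<le>n. w i) = 1"
  shows "integrable (Pi\<^sub>M {..<n} (\<lambda>_. lborel) \<Otimes>\<^sub>M lborel)
            (\<lambda>(y,S). \<Prod>i\<le>n. g i (hyp_point (Suc n) y i + S * w i))
       \<and> integral\<^sup>L (Pi\<^sub>M {..<n} (\<lambda>_. lborel) \<Otimes>\<^sub>M lborel)
            (\<lambda>(y,S). \<Prod>i\<le>n. g i (hyp_point (Suc n) y i + S * w i))
         = (\<Prod>i\<le>n. integral\<^sup>L lborel (g i))"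
proof -
  define M where "M = Pi\<^sub>M {..<n} (\<lambda>_. lborel :: real measure)"
  interpret M: sigma_finite_measure M unfolding M_def by (rule lb.sigma_finite) simp
  interpret MP: pair_sigma_finite M lborel
    by (simp add: pair_sigma_finite_def M.sigma_finite_measure_axioms sigma_finite_lborel)
  have gm[measurable]: "g i \<in> borel_measurable borel" if "i \<le> n" for i
    using borel_measurable_integrable[OF gi[OF that]] by simp
  define P where "P u = (\<Prod>i<n. g i (u i))" for u :: "nat \<Rightarrow> real"
  define Xi where "Xi z = P (fst z) * g n (snd z)" for z :: "(nat \<Rightarrow> real) \<times> real"
  have Pm[measurable]: "P \<in> borel_measurable M"
    unfolding P_def M_def by measurable
  have Pint: "integrable M P"
    unfolding P_def M_def by (rule lb.product_integrable_prod) (auto intro: gi)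
  have Pval: "integral\<^sup>L M P = (\<Prod>i<n. integral\<^sup>L lborel (g i))"
    unfolding P_def M_def by (rule lb.product_integral_prod) (auto intro: gi)
  have Xim[measurable]: "Xi \<in> borel_measurable (M \<Otimes>\<^sub>M lborel)"
    unfolding Xi_def by measurable
  have Xiint: "integrable (M \<Otimes>\<^sub>M lborel) Xi"
  proof (rule integrableI_bounded)
    have "(\<integral>\<^sup>+ z. ennreal (norm (Xi z)) \<partial>(M \<Otimes>\<^sub>M lborel))
        = \<integral>\<^sup>+ u. \<integral>\<^sup>+ t. ennreal (norm (P u)) * ennreal (norm (g n t)) \<partial>lborel \<partial>M"
      by (subst lborel.nn_integral_fst[symmetric]) (auto simp: Xi_def norm_mult ennreal_mult)
    also have "\<dots> = \<integral>\<^sup>+ u. ennreal (norm (P u)) * (\<integral>\<^sup>+ t. ennreal (norm (g n t)) \<partial>lborel) \<partial>M"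
      by (intro nn_integral_cong nn_integral_cmult) auto
    also have "\<dots> = (\<integral>\<^sup>+ u. ennreal (norm (P u)) \<partial>M) * (\<integral>\<^sup>+ t. ennreal (norm (g n t)) \<partial>lborel)"
      by (rule nn_integral_multc) auto
    also have "\<dots> < \<infinity>"
      using Pint gi[of n] unfolding integrable_iff_bounded by (simp add: ennreal_mult_less_top)
    finally show "(\<integral>\<^sup>+ z. ennreal (norm (Xi z)) \<partial>(M \<Otimes>\<^sub>M lborel)) < \<infinity>" .
  qed simp
  have Xival: "integral\<^sup>L (M \<Otimes>\<^sub>M lborel) Xi = (\<Prod>i\<le>n. integral\<^sup>L lborel (g i))"
  proof -
    have "integral\<^sup>L (M \<Otimes>\<^sub>M lborel) Xi = (\<integral>u. \<integral>t. Xi (u,t) \<partial>lborel \<partial>M)"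
      by (rule MP.integral_fst'[OF Xiint, symmetric])
    also have "\<dots> = (\<integral>u. P u * integral\<^sup>L lborel (g n) \<partial>M)"
      by (simp add: Xi_def)
    also have "\<dots> = integral\<^sup>L M P * integral\<^sup>L lborel (g n)"
      by simp
    also have "\<dots> = (\<Prod>i\<le>n. integral\<^sup>L lborel (g i))"
      by (simp add: Pval lessThan_Suc_atMost[symmetric])
    finally show ?thesis .
  qed
  define sh where "sh z = (fst z, snd z + - (\<Sum>i<n. fst z i))" for z :: "(nat \<Rightarrow> real) \<times> real"
  have shm: "sh \<in> M \<Otimes>\<^sub>M lborel \<rightarrow>\<^sub>M M \<Otimes>\<^sub>M lborel"
    unfolding sh_def M_def by measurable
  have shD: "distr (M \<Otimes>\<^sub>M lborel) (M \<Otimes>\<^sub>M lborel) sh = M \<Otimes>\<^sub>M lborel"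
  proof -
    have "distr (M \<Otimes>\<^sub>M lborel) (M \<Otimes>\<^sub>M lborel) (\<lambda>(x,y). (x, (\<lambda>u t. t + - (\<Sum>i<n. u i)) x y)) = M \<Otimes>\<^sub>M lborel"
    proof (rule distr_fiber2)
      show "(\<lambda>(x,y). (x, (\<lambda>u t. t + - (\<Sum>i<n. u i)) x y)) \<in> M \<Otimes>\<^sub>M lborel \<rightarrow>\<^sub>M M \<Otimes>\<^sub>M lborel"
        unfolding M_def by measurable
    qed (auto simp: M.sigma_finite_measure_axioms sigma_finite_lborel distr_lborel_translate[of "- _", simplified])
    moreover have "(\<lambda>(x,y). (x, (\<lambda>u t. t + - (\<Sum>i<n. u i)) x y)) = sh"
      by (auto simp: sh_def fun_eq_iff)
    ultimately show ?thesis by simp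
  qed
  define Psi where "Psi z = Xi (sh z)" for z
  have Psiint: "integrable (M \<Otimes>\<^sub>M lborel) Psi"
    using Xiint unfolding Psi_def by (subst integrable_distr_eq[OF shm, symmetric]) (simp_all add: shD)
  have Psival: "integral\<^sup>L (M \<Otimes>\<^sub>M lborel) Psi = (\<Prod>i\<le>n. integral\<^sup>L lborel (g i))"
    unfolding Psi_def using Xival by (subst integral_distr[OF shm, symmetric]) (simp_all add: shD)
  have Psim[measurable]: "Psi \<in> borel_measurable (M \<Otimes>\<^sub>M lborel)"
    using Psiint by auto
  define tau where "tau z = ((\<lambda>i\<in>{..<n}. fst z i + snd z * w i), snd z)" for z :: "(nat \<Rightarrow> real) \<times> real"
  have taum: "tau \<in> M \<Otimes>\<^sub>M lborel \<rightarrow>\<^sub>M M \<Otimes>\<^sub>M lborel"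
    unfolding tau_def M_def by measurable
  have tauD: "distr (M \<Otimes>\<^sub>M lborel) (M \<Otimes>\<^sub>M lborel) tau = M \<Otimes>\<^sub>M lborel"
  proof -
    have "distr (M \<Otimes>\<^sub>M lborel) (M \<Otimes>\<^sub>M lborel) (\<lambda>(x,y). ((\<lambda>S y. \<lambda>i\<in>{..<n}. y i + S * w i) y x, y)) = M \<Otimes>\<^sub>M lborel"
    proof (rule distr_fiber1)
      show "(\<lambda>(x,y). ((\<lambda>S y. \<lambda>i\<in>{..<n}. y i + S * w i) y x, y)) \<in> M \<Otimes>\<^sub>M lborel \<rightarrow>\<^sub>M M \<Otimes>\<^sub>M lborel"
        unfolding M_def by measurable
    next
      fix S :: real
      show "distr M M ((\<lambda>S y. \<lambda>i\<in>{..<n}. y i + S * w i) S) = M"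
        unfolding M_def using PiM_translate[of "{..<n}" "\<lambda>i. S * w i"] by simp
    next
      fix S :: real
      show "(\<lambda>S y. \<lambda>i\<in>{..<n}. y i + S * w i) S \<in> M \<rightarrow>\<^sub>M M"
        unfolding M_def by measurable
    qed (auto simp: M.sigma_finite_measure_axioms sigma_finite_lborel)
    moreover have "(\<lambda>(x,y). ((\<lambda>S y. \<lambda>i\<in>{..<n}. y i + S * w i) y x, y)) = tau"
      by (auto simp: tau_def fun_eq_iff)
    ultimately show ?thesis by simp
  qed
  define Phi where "Phi z = Psi (tau z)" for z
  have Phiint: "integrable (M \<Otimes>\<^sub>M lborel) Phi"
    using Psiint unfolding Phi_def by (subst integrable_distr_eq[OF taum, symmetric]) (simp_all add: tauD)
  have Phival: "integral\<^sup>L (M \<Otimes>\<^sub>M lborel) Phi = (\<Prod>i\<le>n. integral\<^sup>L lborel (g i))"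
    unfolding Phi_def using Psival by (subst integral_distr[OF taum, symmetric]) (simp_all add: tauD)
  have wn: "(\<Sum>i<n. w i) = 1 - w n"
    using ws by (simp add: lessThan_Suc_atMost[symmetric])
  have eq: "(\<lambda>(y,S). \<Prod>i\<le>n. g i (hyp_point (Suc n) y i + S * w i)) = Phi"
  proof (intro ext, clarify)
    fix y :: "nat \<Rightarrow> real" and S :: real
    have "(\<Sum>i<n. y i + S * w i) = (\<Sum>i<n. y i) + S * (1 - w n)"
      by (simp add: sum.distrib sum_distrib_left[symmetric] wn)
    then have arg: "S - (\<Sum>i<n. y i + S * w i) = S * w n - (\<Sum>j<n. y j)"
      by (simp add: algebra_simps)
    show "(\<Prod>i\<le>n. g i (hyp_point (Suc n) y i + S * w i)) = Phi (y, S)"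
      unfolding Phi_def Psi_def Xi_def P_def tau_def sh_def
      by (simp add: lessThan_Suc_atMost[symmetric] hyp_point_def arg)
  qed
  show ?thesis unfolding eq M_def[symmetric] using Phiint Phival by simp
qed



lemma key_ident:
  fixes c \<nu> x :: real and z :: complex
  assumes c: "c > 0" and nu: "\<nu> > 0"
  shows "complex_of_real \<bar>- (c * \<nu> * exp (- \<nu> * x))\<bar> *
           (complex_of_real (c * exp (- \<nu> * x)) powr (z / of_real \<nu> - 1) / complex_of_real (exp (c * exp (- \<nu> * x))))
       = of_real \<nu> * of_real c powr (z / of_real \<nu>) *
           (complex_of_real (exp (- c * exp (- \<nu> * x))) * exp (- (of_real x * z)))"
proof -
  define L where "L = ln c - \<nu> * x"
  have gx: "c * exp (- \<nu> * x) = exp L" using c by (simp add: L_def exp_diff exp_minus field_simps)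
  have ab: "\<bar>- (c * \<nu> * exp (- \<nu> * x))\<bar> = \<nu> * exp L" using c nu gx by (simp add: mult.commute mult.left_commute)
  have "complex_of_real \<bar>- (c * \<nu> * exp (- \<nu> * x))\<bar> *
           (complex_of_real (c * exp (- \<nu> * x)) powr (z / of_real \<nu> - 1) / complex_of_real (exp (c * exp (- \<nu> * x))))
      = of_real \<nu> * exp (of_real L + (z / of_real \<nu> - 1) * of_real L - of_real (exp L))"
    unfolding ab gx powr_def by (simp add: Ln_of_real exp_add exp_diff exp_of_real[symmetric] mult.commute)
  also have "\<dots> = of_real \<nu> * exp ((z / of_real \<nu>) * of_real (ln c) - of_real x * z - of_real (exp L))"
    using nu by (simp add: L_def field_simps)
  also have "\<dots> = of_real \<nu> * (exp ((z / of_real \<nu>) * of_real (ln c)) * (exp (of_real (- exp L)) * exp (- (of_real x * z))))"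
    by (simp add: exp_add[symmetric] exp_diff exp_minus field_simps)
  also have "\<dots> = of_real \<nu> * of_real c powr (z / of_real \<nu>) *
           (complex_of_real (exp (- c * exp (- \<nu> * x))) * exp (- (of_real x * z)))"
  proof -
    have "complex_of_real c powr (z / of_real \<nu>) = exp ((z / of_real \<nu>) * of_real (ln c))"
      using c by (simp add: powr_def Ln_of_real)
    moreover have "complex_of_real (exp (- c * exp (- \<nu> * x))) = exp (of_real (- exp L))"
      using gx by (simp add: exp_of_real[symmetric])
    ultimately show ?thesis by (simp add: mult.assoc)
  qed
  finally show ?thesis .
qed

lemma oned:
  fixes c \<nu> :: real and z :: complex
  assumes c: "c > 0" and nu: "\<nu> > 0" and z: "Re z > 0"
  shows "integrable lborel (\<lambda>x. complex_of_real (exp (- c * exp (- \<nu> * x))) * exp (- (of_real x * z)))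
    \<and> integral\<^sup>L lborel (\<lambda>x. complex_of_real (exp (- c * exp (- \<nu> * x))) * exp (- (of_real x * z)))
       = Gamma (z / of_real \<nu>) / (of_real \<nu> * of_real c powr (z / of_real \<nu>))"
proof -
  define w where "w = z / of_real \<nu>"
  have w: "Re w > 0" using z nu by (simp add: w_def Re_divide_of_real)
  define F where "F t = complex_of_real t powr (w - 1) / complex_of_real (exp t)" for t :: real
  define G where "G x = complex_of_real (exp (- c * exp (- \<nu> * x))) * exp (- (of_real x * z))" for x :: real
  define g where "g x = c * exp (- \<nu> * x)" for x :: real
  define g' where "g' x = - (c * \<nu> * exp (- \<nu> * x))" for x :: real
  define K where "K = of_real \<nu> * of_real c powr w"
  have K0: "K \<noteq> 0" using nu c by (simp add: K_def)
  have Fint: "integrable lebesgue (\<lambda>t. indicator {0<..} t *\<^sub>R F t)"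
    using absolutely_integrable_Gamma_integral'[OF w] unfolding F_def set_integrable_def .
  have FG: "((\<lambda>t. F t) has_integral Gamma w) {0<..}"
    unfolding F_def by (rule Gamma_integral_complex'[OF w])
  have der: "(g has_field_derivative g' x) (at x within UNIV)" for x
    unfolding g_def g'_def by (auto intro!: derivative_eq_intros)
  have inj: "inj_on g UNIV"
    unfolding g_def inj_on_def using c nu by auto
  have img: "g ` UNIV = {0<..}"
  proof safe
    fix x show "0 < g x" using c by (simp add: g_def)
  next
    fix t :: real assume t: "0 < t"
    have "g (- ln (t / c) / \<nu>) = t" using t c nu by (simp add: g_def)
    then show "t \<in> range g" by (metis rangeI)
  qed
  have HF: "of_real \<bar>g' x\<bar> * F (g x) = K * G x" for x
    unfolding g_def g'_def F_def K_def G_def w_def using key_ident[OF c nu, of x z] by (simp add: mult.assoc)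
  have part: "(\<lambda>x. \<bar>g' x\<bar> * h (g x)) absolutely_integrable_on UNIV
       \<and> integral UNIV (\<lambda>x. \<bar>g' x\<bar> * h (g x)) = b"
    if hi: "h absolutely_integrable_on {0<..}" and hb: "integral {0<..} h = b" for h b
    using has_absolute_integral_change_of_variables_1'[of UNIV g g' h b] der inj img hi hb by auto
  have Rint: "integrable lebesgue (\<lambda>x. \<bar>g' x\<bar> * Re (F (g x)))"
   and Rval: "integral\<^sup>L lebesgue (\<lambda>x. \<bar>g' x\<bar> * Re (F (g x))) = Re (Gamma w)"
  proof -
    have "(\<lambda>t. Re (F t)) absolutely_integrable_on {0<..}"
      using integrable_Re[OF Fint] unfolding set_integrable_def by (simp add: indicator_def if_distrib)
    moreover have "integral {0<..} (\<lambda>t. Re (F t)) = Re (Gamma w)"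
      using has_integral_Re[OF FG] by (rule integral_unique)
    ultimately have *: "(\<lambda>x. \<bar>g' x\<bar> * Re (F (g x))) absolutely_integrable_on UNIV
       \<and> integral UNIV (\<lambda>x. \<bar>g' x\<bar> * Re (F (g x))) = Re (Gamma w)"
      by (rule part)
    then show "integrable lebesgue (\<lambda>x. \<bar>g' x\<bar> * Re (F (g x)))"
      unfolding set_integrable_def by simp
    then show "integral\<^sup>L lebesgue (\<lambda>x. \<bar>g' x\<bar> * Re (F (g x))) = Re (Gamma w)"
      using * integral_lebesgue by metis
  qed
  have Iint: "integrable lebesgue (\<lambda>x. \<bar>g' x\<bar> * Im (F (g x)))"
   and Ival: "integral\<^sup>L lebesgue (\<lambda>x. \<bar>g' x\<bar> * Im (F (g x))) = Im (Gamma w)"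
  proof -
    have "(\<lambda>t. Im (F t)) absolutely_integrable_on {0<..}"
      using integrable_Im[OF Fint] unfolding set_integrable_def by (simp add: indicator_def if_distrib)
    moreover have "integral {0<..} (\<lambda>t. Im (F t)) = Im (Gamma w)"
      using has_integral_Im[OF FG] by (rule integral_unique)
    ultimately have *: "(\<lambda>x. \<bar>g' x\<bar> * Im (F (g x))) absolutely_integrable_on UNIV
       \<and> integral UNIV (\<lambda>x. \<bar>g' x\<bar> * Im (F (g x))) = Im (Gamma w)"
      by (rule part)
    then show "integrable lebesgue (\<lambda>x. \<bar>g' x\<bar> * Im (F (g x)))"
      unfolding set_integrable_def by simp
    then show "integral\<^sup>L lebesgue (\<lambda>x. \<bar>g' x\<bar> * Im (F (g x))) = Im (Gamma w)"
      using * integral_lebesgue by metis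
  qed
  have Hdef: "K * G x = of_real (\<bar>g' x\<bar> * Re (F (g x))) + \<i> * of_real (\<bar>g' x\<bar> * Im (F (g x)))" for x
    unfolding HF[symmetric] by (simp add: complex_eq_iff)
  have a: "integrable lebesgue (\<lambda>x. complex_of_real (\<bar>g' x\<bar> * Re (F (g x))))" by (rule integrable_of_real[OF Rint])
  have b: "integrable lebesgue (\<lambda>x. complex_of_real (\<bar>g' x\<bar> * Im (F (g x))))" by (rule integrable_of_real[OF Iint])
  have Hint: "integrable lebesgue (\<lambda>x. K * G x)"
    unfolding Hdef using Bochner_Integration.integrable_add[OF a integrable_mult_right[OF b, of "\<i>"]] by simp
  have Hval: "integral\<^sup>L lebesgue (\<lambda>x. K * G x) = Gamma w"
  proof -
    have "integral\<^sup>L lebesgue (\<lambda>x. K * G x) = integral\<^sup>L lebesgue (\<lambda>x. complex_of_real (\<bar>g' x\<bar> * Re (F (g x))))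
        + integral\<^sup>L lebesgue (\<lambda>x. \<i> * complex_of_real (\<bar>g' x\<bar> * Im (F (g x))))"
      unfolding Hdef by (rule Bochner_Integration.integral_add[OF a integrable_mult_right[OF b]])
    also have "\<dots> = of_real (Re (Gamma w)) + \<i> * of_real (Im (Gamma w))"
      by (simp only: integral_mult_right_zero integral_complex_of_real Rval Ival)
    also have "\<dots> = Gamma w" by (simp add: complex_eq_iff)
    finally show ?thesis .
  qed
  have Gint: "integrable lebesgue G"
    using integrable_mult_right[OF Hint, of "inverse K"] K0 by (simp add: field_simps)
  have Gval: "integral\<^sup>L lebesgue G = Gamma w / K"
  proof -
    have "integral\<^sup>L lebesgue (\<lambda>x. K * G x) = K * integral\<^sup>L lebesgue G" by simp
    then show ?thesis using Hval K0 by (simp add: field_simps)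
  qed
  have Gm: "G \<in> borel_measurable lborel" unfolding G_def by measurable
  have "integrable lborel G" using Gint Gm by (simp add: integrable_completion)
  moreover have "integral\<^sup>L lborel G = Gamma w / K" using Gval Gm by (simp add: integral_completion)
  ultimately show ?thesis unfolding G_def K_def w_def by simp
qed



lemma cpowr_real: "x > 0 \<Longrightarrow> complex_of_real x powr s = exp (s * of_real (ln x))"
  by (simp add: powr_def Ln_of_real)

lemma cpowr_prod:
  fixes a :: "nat \<Rightarrow> real" and t :: "nat \<Rightarrow> real" and s :: complex
  assumes "finite I" "\<And>i. i \<in> I \<Longrightarrow> a i > 0"
  shows "complex_of_real (\<Prod>i\<in>I. a i powr t i) powr s = (\<Prod>i\<in>I. complex_of_real (a i) powr (of_real (t i) * s))"
proof -
  have pos: "(\<Prod>i\<in>I. a i powr t i) > 0" using assms(2) by (intro prod_pos) (metis powr_gt_zero less_irrefl)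
  have "complex_of_real (\<Prod>i\<in>I. a i powr t i) powr s = exp (s * of_real (\<Sum>i\<in>I. t i * ln (a i)))"
  proof -
    have "ln (\<Prod>i\<in>I. a i powr t i) = (\<Sum>i\<in>I. t i * ln (a i))"
      using assms(1) by (subst ln_prod) (use assms(2) in \<open>force simp: ln_powr\<close>)+
    then show ?thesis using pos by (subst cpowr_real[OF pos]) simp
  qed
  also have "\<dots> = exp (\<Sum>i\<in>I. of_real (t i) * s * of_real (ln (a i)))"
    by (simp add: sum_distrib_left mult_ac)
  also have "\<dots> = (\<Prod>i\<in>I. complex_of_real (a i) powr (of_real (t i) * s))"
    using assms by (simp add: exp_sum cpowr_real mult_ac)
  finally show ?thesis .
qed

theorem mainTheorem10:
  fixes N :: nat and c :: "nat \<Rightarrow> real" and \<nu> :: "nat \<Rightarrow> nat" and s :: complex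
  assumes "N \<ge> 2"
    and "\<forall>i<N. c i > 0"
    and "\<forall>i<N. \<nu> i > 0"
    and "Re s > 0"
  defines "q \<equiv> 1 / (\<Sum>i<N. 1 / real (\<nu> i))"
  shows "integrable (Pi\<^sub>M {..<N - 1} (\<lambda>_. lborel))
           (\<lambda>y. complex_of_real (\<Sum>i<N. c i * exp (- real (\<nu> i) * hyp_point N y i)) powr (- s))
       \<and> integral\<^sup>L (Pi\<^sub>M {..<N - 1} (\<lambda>_. lborel))
           (\<lambda>y. complex_of_real (\<Sum>i<N. c i * exp (- real (\<nu> i) * hyp_point N y i)) powr (- s))
         = complex_of_real (q / real (\<Prod>i<N. \<nu> i))
           * complex_of_real (\<Prod>i<N. c i powr (q / real (\<nu> i))) powr (- s)
           * inverse (Gamma s)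
           * (\<Prod>i<N. Gamma (complex_of_real (q / real (\<nu> i)) * s))"
proof -
  obtain n where N: "N = Suc n" using assms(1) by (cases N) auto
  have UN: "{..<N} = {..n}" by (simp add: N lessThan_Suc_atMost)
  have cpos: "c i > 0" if "i \<le> n" for i using assms(2) that N by auto
  have nupos: "real (\<nu> i) > 0" if "i \<le> n" for i using assms(3) that N by auto
  have Spos: "(\<Sum>i\<le>n. 1 / real (\<nu> i)) > 0" using nupos by (intro sum_pos) auto
  have qpos: "q > 0" unfolding q_def UN using Spos by simp
  define w where "w i = q / real (\<nu> i)" for i
  have ws: "(\<Sum>i\<le>n. w i) = 1"
  proof -
    have "(\<Sum>i\<le>n. w i) = q * (\<Sum>i\<le>n. 1 / real (\<nu> i))" by (simp add: w_def sum_distrib_left)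
    then show ?thesis using Spos unfolding q_def UN by simp
  qed
  have nuw: "real (\<nu> i) * w i = q" if "i \<le> n" for i using nupos[OF that] by (simp add: w_def)
  define z where "z = complex_of_real q * s"
  have zpos: "Re z > 0" using qpos assms(4) by (simp add: z_def)
  define g where "g i t = complex_of_real (exp (- c i * exp (- real (\<nu> i) * t))) * exp (- (of_real t * z))" for i t
  have gi: "integrable lborel (g i)" and gv: "integral\<^sup>L lborel (g i) = Gamma (z / of_real (real (\<nu> i))) /
        (of_real (real (\<nu> i)) * of_real (c i) powr (z / of_real (real (\<nu> i))))" if "i \<le> n" for i
    using oned[OF cpos[OF that] nupos[OF that] zpos] unfolding g_def by auto
  define M where "M = Pi\<^sub>M {..<n} (\<lambda>_. lborel :: real measure)"
  interpret M: sigma_finite_measure M unfolding M_def by (rule lb.sigma_finite) simp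
  interpret MP: pair_sigma_finite M lborel
    by (simp add: pair_sigma_finite_def M.sigma_finite_measure_axioms sigma_finite_lborel)
  define Phi where "Phi = (\<lambda>(y,S). \<Prod>i\<le>n. g i (hyp_point (Suc n) y i + S * w i))"
  have H: "integrable (M \<Otimes>\<^sub>M lborel) Phi \<and> integral\<^sup>L (M \<Otimes>\<^sub>M lborel) Phi = (\<Prod>i\<le>n. integral\<^sup>L lborel (g i))"
    unfolding Phi_def M_def by (rule hyper) (use gi ws in auto)
  define f where "f y = (\<Sum>i<N. c i * exp (- real (\<nu> i) * hyp_point N y i))" for y
  have fpos: "f y > 0" for y unfolding f_def UN using cpos by (intro sum_pos) auto
  have hsum: "(\<Sum>i\<le>n. hyp_point (Suc n) y i) = 0" for y
    by (simp add: hyp_point_def lessThan_Suc_atMost[symmetric])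
  have prodeq: "Phi (y, S) = complex_of_real (exp (- f y * exp (- q * S))) * exp (- (of_real S * z))" for y S
  proof -
    have e1: "(\<Prod>i\<le>n. complex_of_real (exp (- c i * exp (- real (\<nu> i) * (hyp_point (Suc n) y i + S * w i)))))
        = complex_of_real (exp (- f y * exp (- q * S)))"
    proof -
      have "(\<Sum>i\<le>n. - c i * exp (- real (\<nu> i) * (hyp_point (Suc n) y i + S * w i)))
          = (\<Sum>i\<le>n. - c i * exp (- real (\<nu> i) * hyp_point (Suc n) y i) * exp (- q * S))"
      proof (intro sum.cong refl)
        fix i assume i: "i \<in> {..n}"
        have arg: "- real (\<nu> i) * (hyp_point (Suc n) y i + S * w i) = - real (\<nu> i) * hyp_point (Suc n) y i + - q * S"
          using nuw[of i] i by (simp add: algebra_simps)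
        show "- c i * exp (- real (\<nu> i) * (hyp_point (Suc n) y i + S * w i))
          = - c i * exp (- real (\<nu> i) * hyp_point (Suc n) y i) * exp (- q * S)"
          by (simp only: arg exp_add mult.assoc)
      qed
      also have "\<dots> = - f y * exp (- q * S)"
        unfolding f_def UN by (simp add: N sum_distrib_right sum_negf)
      finally have X: "(\<Sum>i\<le>n. - c i * exp (- real (\<nu> i) * (hyp_point (Suc n) y i + S * w i))) = - f y * exp (- q * S)" .
      show ?thesis unfolding X[symmetric] by (simp only: exp_sum finite_atMost of_real_prod)
    qed
    have e2: "(\<Prod>i\<le>n. exp (- (complex_of_real (hyp_point (Suc n) y i + S * w i) * z))) = exp (- (of_real S * z))"
    proof -
      have "(\<Sum>i\<le>n. - (complex_of_real (hyp_point (Suc n) y i + S * w i) * z))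
          = - (complex_of_real (\<Sum>i\<le>n. hyp_point (Suc n) y i + S * w i) * z)"
        by (simp add: sum_distrib_right sum_negf)
      also have "(\<Sum>i\<le>n. hyp_point (Suc n) y i + S * w i) = S"
        by (simp add: sum.distrib hsum sum_distrib_left[symmetric] ws)
      finally show ?thesis by (simp add: exp_sum[symmetric])
    qed
    show ?thesis unfolding Phi_def g_def using e1 e2 by (simp add: prod.distrib)
  qed
  have Gs: "Gamma s \<noteq> 0"
    using assms(4) by (intro Gamma_nonzero) (auto elim!: nonpos_Ints_cases)
  have inner: "integral\<^sup>L lborel (\<lambda>S. Phi (y, S)) = Gamma s / (of_real q * of_real (f y) powr s)" for y
  proof -
    have zq: "z / complex_of_real q = s" using qpos by (simp add: z_def)
    show ?thesis using oned[OF fpos[of y] qpos zpos] unfolding prodeq zq by simp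
  qed
  have pt: "complex_of_real (f y) powr (- s) = (of_real q / Gamma s) * integral\<^sup>L lborel (\<lambda>S. Phi (y, S))" for y
    unfolding inner using qpos Gs fpos[of y] by (simp add: powr_minus field_simps)
  have Iint: "integrable M (\<lambda>y. integral\<^sup>L lborel (\<lambda>S. Phi (y, S)))"
    using MP.integrable_fst'[of Phi] H by simp
  have Ival: "integral\<^sup>L M (\<lambda>y. integral\<^sup>L lborel (\<lambda>S. Phi (y, S))) = (\<Prod>i\<le>n. integral\<^sup>L lborel (g i))"
    using MP.integral_fst'[of Phi] H by simp
  have MN: "Pi\<^sub>M {..<N - 1} (\<lambda>_. lborel) = M" by (simp add: M_def N)
  have feq: "(\<lambda>y. complex_of_real (\<Sum>i<N. c i * exp (- real (\<nu> i) * hyp_point N y i)) powr (- s))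
     = (\<lambda>y. (of_real q / Gamma s) * integral\<^sup>L lborel (\<lambda>S. Phi (y, S)))"
    using pt by (simp add: f_def)
  have final: "(of_real q / Gamma s) * (\<Prod>i\<le>n. integral\<^sup>L lborel (g i)) =
      complex_of_real (q / real (\<Prod>i<N. \<nu> i))
           * complex_of_real (\<Prod>i<N. c i powr (q / real (\<nu> i))) powr (- s)
           * inverse (Gamma s)
           * (\<Prod>i<N. Gamma (complex_of_real (q / real (\<nu> i)) * s))"
  proof -
    have zi: "z / of_real (real (\<nu> i)) = of_real (q / real (\<nu> i)) * s" for i
      by (simp add: z_def)
    define A where "A = (\<Prod>i\<le>n. Gamma (complex_of_real (q / real (\<nu> i)) * s))"
    define B where "B = (\<Prod>i\<le>n. complex_of_real (c i) powr (complex_of_real (q / real (\<nu> i)) * s))"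
    define C where "C = (\<Prod>i\<le>n. complex_of_real (real (\<nu> i)))"
    have B0: "B \<noteq> 0" unfolding B_def using cpos by (auto simp: prod_zero_iff) (metis less_irrefl)
    have C0: "C \<noteq> 0" unfolding C_def using nupos by (auto simp: prod_zero_iff)
    have L: "(\<Prod>i\<le>n. integral\<^sup>L lborel (g i)) = A / (C * B)"
      unfolding A_def B_def C_def by (simp add: gv z_def prod_dividef prod.distrib)
    have R1: "complex_of_real (\<Prod>i\<le>n. c i powr (q / real (\<nu> i))) powr (- s) = inverse B"
      unfolding B_def powr_minus by (subst cpowr_prod) (use cpos in auto)
    have R2: "complex_of_real (q / real (\<Prod>i\<le>n. \<nu> i)) = of_real q / C"
      unfolding C_def by simp
    show ?thesis unfolding UN unfolding L R1 R2 A_def[symmetric] using B0 C0 Gs by (simp add: field_simps)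
  qed
  show ?thesis unfolding MN feq using Iint Ival final by simp
qed

end
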